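(* Let $p\ge 3$ be an integer, $w=2\cos(\pi/p)$, and for real $S$ set $$X_S=\begin{pmatrix}0&-e^{S/2}\\ e^{-S/2}&0\end{pmatrix},\quad R=\begin{pmatrix}1&1\\-1&0\end{pmatrix},\quad L=\begin{pmatrix}0&1\\-1&-1\end{pmatrix},\quad F_p=\begin{pmatrix}0&1\\-1&-w\end{pmatrix}.$$ Let $Z\in\mathbb R$ and define $e^{Z_1}=e^Z\frac{\sin(2\pi/p)}{\sin(\pi/p)}$, $e^{Z_p}=e^Z\frac{\sin(\pi/p)}{\sin(2\pi/p)}$, $e^{Z_k}=e^Z\frac{\sin((k-1)\pi/p)}{\sin(k\pi/p)}$ for $k=2,\dots,p-1$, and $e^{Y_k}=\frac{\sin((k+1)\pi/p)}{\sin((k-1)\pi/p)}$ for $k=2,\dots,p-2$. Then $$X_ZF_pX_Z=X_{Z_1}LX_{Z_2},$$ for every $k=2,\dots,p-2$ $$X_Z(-1)^{k-1}F_p^{k}X_Z=X_{Z_1}RX_{Y_2}R\cdots RX_{Y_k}LX_{Z_{k+1}},$$ and $$X_Z(-1)^{p}F_p^{p-1}X_Z=X_{Z_1}RX_{Y_2}R\cdots RX_{Y_{p-2}}RX_{Z_p}$$ (for $p=3$ the right-hand side of the last identity is $X_{Z_1}RX_{Z_3}$). *)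

theory Defs
  imports "HOL-Analysis.Analysis"
begin

definition mat2 :: "real \<Rightarrow> real \<Rightarrow> real \<Rightarrow> real \<Rightarrow> real^2^2" where
  "mat2 a b c d = vector [vector [a, b], vector [c, d]]"

fun mpow :: "real^2^2 \<Rightarrow> nat \<Rightarrow> real^2^2" where
  "mpow A 0 = mat 1"
| "mpow A (Suc n) = A ** mpow A n"

definition Xm :: "real \<Rightarrow> real^2^2" where
  "Xm S = mat2 0 (- exp (S/2)) (exp (- S/2)) 0"

definition Rm :: "real^2^2" where "Rm = mat2 1 1 (-1) 0"
definition Lm :: "real^2^2" where "Lm = mat2 0 1 (-1) (-1)"

definition wp :: "nat \<Rightarrow> real" where "wp p = 2 * cos (pi / real p)"

definition Fm :: "nat \<Rightarrow> real^2^2" where "Fm p = mat2 0 1 (-1) (- wp p)"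

definition Zk :: "nat \<Rightarrow> real \<Rightarrow> nat \<Rightarrow> real" where
  "Zk p Z k =
     (if k = 1 then Z + ln (sin (2*pi/real p) / sin (pi/real p))
      else if k = p then Z + ln (sin (pi/real p) / sin (2*pi/real p))
      else Z + ln (sin (real (k-1)*pi/real p) / sin (real k*pi/real p)))"

definition Yk :: "nat \<Rightarrow> nat \<Rightarrow> real" where
  "Yk p k = ln (sin (real (k+1)*pi/real p) / sin (real (k-1)*pi/real p))"

text \<open>The ordered product R X_{Y_2} R X_{Y_3} ... R X_{Y_k} (identity if k < 2).\<close>
definition chainRY :: "nat \<Rightarrow> nat \<Rightarrow> real^2^2" where
  "chainRY p k = foldr (\<lambda>j acc. (Rm ** Xm (Yk p j)) ** acc) [2..<Suc k] (mat 1)"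

end

theory Submission
  imports Defs
begin

lemma mat2_nth: "mat2 a b c d $ 1 $ 1 = a" "mat2 a b c d $ 1 $ 2 = b" "mat2 a b c d $ 2 $ 1 = c" "mat2 a b c d $ 2 $ 2 = d"
  by (simp_all add: mat2_def)
lemma mat2_eq_iff: "mat2 a b c d = mat2 a' b' c' d' \<longleftrightarrow> a = a' \<and> b = b' \<and> c = c' \<and> d = d'"
  by (metis mat2_nth)
lemma mat2_mult: "mat2 a b c d ** mat2 e f g h = mat2 (a*e+b*g) (a*f+b*h) (c*e+d*g) (c*f+d*h)"
  by (simp add: vec_eq_iff forall_2 matrix_matrix_mult_def sum_2 mat2_nth)
lemma mat2_scale: "x *\<^sub>R mat2 a b c d = mat2 (x*a) (x*b) (x*c) (x*d)"
  by (simp add: vec_eq_iff forall_2 mat2_nth)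
lemma mat2_one: "mat 1 = mat2 1 0 0 1"
  by (simp add: vec_eq_iff forall_2 mat2_nth mat_def)

lemma sin_prod: "sin ((a::real)+t) * sin (a-t) = (sin a)^2 - (sin t)^2"
proof -
  have "sin (a+t) * sin (a-t) = (sin a)^2 * (cos t)^2 - (cos a)^2 * (sin t)^2"
    unfolding sin_add sin_diff by (simp add: algebra_simps power2_eq_square)
  also have "\<dots> = (sin a)^2 * (1 - (sin t)^2) - (1 - (sin a)^2) * (sin t)^2"
    by (simp add: cos_squared_eq)
  finally show ?thesis by (simp add: algebra_simps)
qed
lemma sin_sum2: "2 * cos t * sin (a::real) = sin (a + t) + sin (a - t)"
  unfolding sin_add sin_diff by simp
lemma exp_half_ln: "x > 0 \<Longrightarrow> exp (ln x / 2) = sqrt x"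
  by (simp add: powr_def powr_half_sqrt[symmetric] mult.commute)
lemma Xm_eq: "Xm S = mat2 0 (- exp (S/2)) (1 / exp (S/2)) 0"
  by (simp add: Xm_def exp_minus field_simps)
lemma Xm_Zln: "a > 0 \<Longrightarrow> b > 0 \<Longrightarrow> Xm (Z + ln (a/b)) = mat2 0 (- (exp (Z/2) * sqrt a / sqrt b)) (sqrt b / (exp (Z/2) * sqrt a)) 0"
  unfolding Xm_eq add_divide_distrib exp_add by (simp add: exp_half_ln real_sqrt_divide)
lemma Xm_ln: "a > 0 \<Longrightarrow> b > 0 \<Longrightarrow> Xm (ln (a/b)) = mat2 0 (- (sqrt a / sqrt b)) (sqrt b / (sqrt a)) 0"
  using Xm_Zln[of a b 0] by simp

definition ss :: "nat \<Rightarrow> nat \<Rightarrow> real" where "ss p j = sin (real j * pi / real p)"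

lemma ss_pos: "1 \<le> j \<Longrightarrow> j < p \<Longrightarrow> ss p j > 0"
  unfolding ss_def by (rule sin_gt_zero) (auto simp: field_simps)
lemma ss_0: "ss p 0 = 0" by (simp add: ss_def)
lemma ss_refl: "j \<le> p \<Longrightarrow> p > 0 \<Longrightarrow> ss p (p - j) = ss p j"
proof -
  assume "j \<le> p" "p > 0"
  hence "real (p - j) * pi / real p = pi - real j * pi / real p"
    by (simp add: of_nat_diff field_simps)
  thus ?thesis by (simp add: ss_def)
qed
lemma ss_rec: "p > 0 \<Longrightarrow> wp p * ss p (Suc j) = ss p (j+2) + ss p j"
proof -
  assume "p > 0"
  have "wp p * ss p (Suc j) = sin (real (Suc j) * pi / real p + pi / real p) + sin (real (Suc j) * pi / real p - pi / real p)"
    unfolding wp_def ss_def by (rule sin_sum2)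
  also have "real (Suc j) * pi / real p + pi / real p = real (j+2) * pi / real p"
    by (simp add: add_divide_distrib[symmetric] algebra_simps)
  also have "real (Suc j) * pi / real p - pi / real p = real j * pi / real p"
    by (simp add: diff_divide_distrib[symmetric] algebra_simps)
  finally show ?thesis by (simp add: ss_def)
qed
lemma ss_prod: "ss p (Suc j) ^ 2 - ss p j * ss p (j+2) = ss p 1 ^ 2"
proof -
  have "ss p (j+2) * ss p j = sin (real (Suc j) * pi / real p + pi / real p) * sin (real (Suc j) * pi / real p - pi / real p)"
  proof -
    have "real (Suc j) * pi / real p + pi / real p = real (j+2) * pi / real p"
      by (simp add: add_divide_distrib[symmetric] algebra_simps)
    moreover have "real (Suc j) * pi / real p - pi / real p = real j * pi / real p"
      by (simp add: diff_divide_distrib[symmetric] algebra_simps)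
    ultimately show ?thesis unfolding ss_def by simp
  qed
  also have "\<dots> = ss p (Suc j) ^ 2 - ss p 1 ^ 2" unfolding sin_prod ss_def by simp
  finally show ?thesis by (simp add: mult.commute)
qed

lemma mpow_F: "p \<ge> 2 \<Longrightarrow> mpow (Fm p) (Suc k) = ((-1)^(Suc k) / ss p 1) *\<^sub>R mat2 (- ss p k) (- ss p (Suc k)) (ss p (Suc k)) (ss p (k+2))"
proof (induction k)
  case 0
  have p1: "ss p 1 > 0" using 0 by (intro ss_pos) auto
  have r: "wp p * ss p 1 = ss p 2" using ss_rec[of p 0] 0 by (simp add: ss_0 numeral_2_eq_2)
  show ?case using p1 r
    by (simp add: Fm_def mat2_one mat2_mult mat2_scale mat2_eq_iff field_simps ss_0 numeral_2_eq_2)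
next
  case (Suc k)
  have p1: "ss p 1 > 0" using Suc by (intro ss_pos) auto
  have r: "wp p * ss p (Suc (Suc k)) = ss p (Suc (Suc (Suc k))) + ss p (Suc k)" using ss_rec[of p "Suc k"] Suc by (simp add: eval_nat_numeral)
  have r0: "wp p * ss p (Suc k) = ss p (Suc (Suc k)) + ss p k" using ss_rec[of p k] Suc by (simp add: eval_nat_numeral)
  have "mpow (Fm p) (Suc (Suc k)) = Fm p ** mpow (Fm p) (Suc k)" by simp
  also have "\<dots> = Fm p ** (((-1)^(Suc k) / ss p 1) *\<^sub>R mat2 (- ss p k) (- ss p (Suc k)) (ss p (Suc k)) (ss p (k+2)))"
    using Suc by simp
  also have "\<dots> = ((-1)^(Suc (Suc k)) / ss p 1) *\<^sub>R mat2 (- ss p (Suc k)) (- ss p (Suc (Suc k))) (ss p (Suc (Suc k))) (ss p (Suc (Suc (Suc k))))"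
  proof -
    have e1: "wp p * ((- 1) ^ k * ss p (Suc k)) = (- 1) ^ k * (wp p * ss p (Suc k))" by simp
    have e2: "wp p * ((- 1) ^ k * ss p (Suc (Suc k))) = (- 1) ^ k * (wp p * ss p (Suc (Suc k)))" by simp
    show ?thesis
      unfolding Fm_def mat2_scale mat2_mult mat2_eq_iff using p1
      apply (simp add: field_simps eval_nat_numeral)
      apply (simp only: e1 e2 r r0)
      apply (simp add: algebra_simps)
      done
  qed
  finally show ?case by (simp add: eval_nat_numeral)
qed

lemma Zk1: "p \<ge> 3 \<Longrightarrow> Zk p Z 1 = Z + ln (ss p 2 / ss p 1)"
  by (simp add: Zk_def ss_def)
lemma Zkj: "2 \<le> j \<Longrightarrow> j < p \<Longrightarrow> Zk p Z j = Z + ln (ss p (j-1) / ss p j)"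
  by (simp add: Zk_def ss_def)
lemma Zkp: "p \<ge> 3 \<Longrightarrow> Zk p Z p = Z + ln (ss p 1 / ss p 2)"
  by (simp add: Zk_def ss_def)
lemma Ykj: "Yk p j = ln (ss p (j+1) / ss p (j-1))"
  by (simp add: Yk_def ss_def)

lemma foldr_mult: "foldr (\<lambda>j acc. (Rm ** Xm (Yk p j)) ** acc) xs B = foldr (\<lambda>j acc. (Rm ** Xm (Yk p j)) ** acc) xs (mat 1) ** B"
  by (induction xs) (simp_all add: matrix_mul_assoc)
lemma chain_snoc: "1 \<le> k \<Longrightarrow> chainRY p (Suc k) = chainRY p k ** (Rm ** Xm (Yk p (Suc k)))"
proof -
  assume "1 \<le> k"
  hence "[2..<Suc (Suc k)] = [2..<Suc k] @ [Suc k]" by simp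
  thus ?thesis unfolding chainRY_def by (simp add: foldr_mult[where B = "Rm ** Xm (Yk p (Suc k))"])
qed

lemma step_alg:
  fixes a b c E t u :: real
  assumes "a > 0" "b > 0" "c > 0" "E > 0" "t > 0" "u * b^2 + t^2 = a^4"
  shows "mat2 0 (-(E*a*b/t)) (t/(E*a*b)) (-(u*b^2/(t*E*a*b))) ** (Rm ** mat2 0 (-(c/a)) (a/c) 0)
       = mat2 0 (-(E*b*c/t)) (t/(E*b*c)) (-(a^2*c^2/(t*E*b*c)))"
  unfolding Rm_def mat2_mult mat2_eq_iff using assms
  apply (simp add: field_simps)
  apply algebra
  done

definition Qf :: "nat \<Rightarrow> real \<Rightarrow> nat \<Rightarrow> real^2^2" where
 "Qf p Z k = mat2 0 (-(exp(Z/2)* sqrt(ss p k)* sqrt(ss p (Suc k))/ss p 1))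
     (ss p 1/(exp(Z/2)* sqrt(ss p k)* sqrt(ss p (Suc k))))
     (-(ss p (k-1)*(sqrt (ss p (Suc k)))^2/(ss p 1*exp(Z/2)* sqrt(ss p k)* sqrt(ss p (Suc k)))))"

lemma Q_lemma: assumes "p \<ge> 3" "1 \<le> k" shows "k \<le> p - 2 \<longrightarrow> Xm (Zk p Z 1) ** chainRY p k = Qf p Z k"
  using assms(2)
proof (induction k rule: dec_induct)
  case base
  have s1: "ss p 1 > 0" "ss p 2 > 0" using assms by (auto intro!: ss_pos)
  define a where "a = sqrt (ss p 1)"
  define b where "b = sqrt (ss p 2)"
  have ab: "a > 0" "b > 0" using s1 by (auto simp: a_def b_def)
  have sq: "ss p 1 = a^2" "ss p 2 = b^2" using s1 by (auto simp: a_def b_def)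
  have X1: "Xm (Zk p Z 1) = mat2 0 (-(exp(Z/2)*b/a)) (a/(exp(Z/2)*b)) 0"
    unfolding Zk1[OF assms(1)] a_def b_def by (rule Xm_Zln) (use s1 in auto)
  have Q1: "Qf p Z 1 = mat2 0 (-(exp(Z/2)*a*b/a^2)) (a^2/(exp(Z/2)*a*b)) 0"
    using s1 by (simp add: Qf_def ss_0 a_def b_def numeral_2_eq_2 sq(1)[symmetric])
  have c1: "chainRY p 1 = mat 1" by (simp add: chainRY_def)
  show ?case unfolding c1 X1 Q1 mat2_one mat2_mult
    using ab by (simp add: mat2_eq_iff field_simps power2_eq_square)
next
  case (step k)
  show ?case
  proof
    assume k: "Suc k \<le> p - 2"
    define a where "a = sqrt (ss p k)"
    define b where "b = sqrt (ss p (Suc k))"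
    define c where "c = sqrt (ss p (Suc (Suc k)))"
    have pos: "ss p k > 0" "ss p (Suc k) > 0" "ss p (Suc (Suc k)) > 0" "ss p 1 > 0"
      using k step(1) assms by (auto intro!: ss_pos)
    have abc: "a > 0" "b > 0" "c > 0" using pos by (auto simp: a_def b_def c_def)
    have sq: "ss p k = a^2" "ss p (Suc k) = b^2" "ss p (Suc (Suc k)) = c^2"
      using pos by (auto simp: a_def b_def c_def)
    have pr: "ss p (k-1) * b^2 + (ss p 1)^2 = a^4"
      using ss_prod[of p "k-1"] step(1) sq by (cases k) (auto simp: eval_nat_numeral algebra_simps)
    have Q: "Qf p Z k = mat2 0 (-(exp(Z/2)*a*b/ss p 1)) (ss p 1/(exp(Z/2)*a*b)) (-(ss p (k-1)*b^2/(ss p 1*exp(Z/2)*a*b)))"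
      by (simp add: Qf_def a_def b_def)
    have Q': "Qf p Z (Suc k) = mat2 0 (-(exp(Z/2)*b*c/ss p 1)) (ss p 1/(exp(Z/2)*b*c)) (-(a^2*c^2/(ss p 1*exp(Z/2)*b*c)))"
      by (simp add: Qf_def b_def c_def sq(1)[symmetric] pos(3) less_imp_le)
    have Y: "Xm (Yk p (Suc k)) = mat2 0 (-(c/a)) (a/c) 0"
      using pos by (simp add: Ykj Xm_ln a_def c_def)
    have "Xm (Zk p Z 1) ** chainRY p (Suc k) = (Xm (Zk p Z 1) ** chainRY p k) ** (Rm ** Xm (Yk p (Suc k)))"
      using step(1) by (simp add: chain_snoc matrix_mul_assoc)
    also have "\<dots> = Qf p Z (Suc k)"
    proof -
      have IH: "Xm (Zk p Z 1) ** chainRY p k = Qf p Z k" using step(3) k by simp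
      show ?thesis unfolding IH Q Q' Y by (rule step_alg[OF abc exp_gt_zero pos(4) pr])
    qed
    finally show "Xm (Zk p Z 1) ** chainRY p (Suc k) = Qf p Z (Suc k)" .
  qed
qed

lemma fin_alg:
  fixes a b E t u :: real
  assumes "a > 0" "b > 0" "E > 0" "t > 0" "u * b^2 + t^2 = a^4"
  shows "mat2 0 (-(E*a*b/t)) (t/(E*a*b)) (-(u*b^2/(t*E*a*b))) ** Lm ** mat2 0 (-(E*a/b)) (b/(E*a)) 0
     = mat2 0 (-E) (1/E) 0 ** ((-1/t) *\<^sub>R mat2 (-u) (-(a^2)) (a^2) (b^2)) ** mat2 0 (-E) (1/E) 0"
  unfolding Lm_def mat2_mult mat2_scale mat2_eq_iff using assms
  apply (simp add: field_simps)
  apply algebra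
  done
lemma fin2_alg:
  fixes a b E u :: real
  assumes "a > 0" "b > 0" "E > 0" "u * b^2 + (b^2)^2 = a^4"
  shows "mat2 0 (-(E*a*b/b^2)) (b^2/(E*a*b)) (-(u*b^2/(b^2*E*a*b))) ** Rm ** mat2 0 (-(E*b/a)) (a/(E*b)) 0
     = mat2 0 (-E) (1/E) 0 ** ((-1/b^2) *\<^sub>R mat2 (-(a^2)) (-(b^2)) (b^2) 0) ** mat2 0 (-E) (1/E) 0"
  unfolding Rm_def mat2_mult mat2_scale mat2_eq_iff using assms
  apply (simp add: field_simps)
  apply algebra
  done

lemma gen_k:
  assumes p: "p \<ge> 3" and k: "1 \<le> k" "k \<le> p - 2"
  shows "Xm Z ** (((-1::real) ^ (k - 1)) *\<^sub>R mpow (Fm p) k) ** Xm Z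
       = Xm (Zk p Z 1) ** chainRY p k ** Lm ** Xm (Zk p Z (k + 1))"
proof -
  obtain m where m: "k = Suc m" using k by (cases k) auto
  define a where "a = sqrt (ss p k)"
  define b where "b = sqrt (ss p (Suc k))"
  define E where "E = exp (Z/2)"
  have pos: "ss p k > 0" "ss p (Suc k) > 0" "ss p 1 > 0"
    using k p by (auto intro!: ss_pos)
  have ab: "a > 0" "b > 0" "E > 0" using pos by (auto simp: a_def b_def E_def)
  have sq: "ss p k = a^2" "ss p (Suc k) = b^2"
    using pos by (auto simp: a_def b_def)
  have pr: "ss p (k-1) * b^2 + (ss p 1)^2 = a^4"
    using ss_prod[of p "k-1"] k sq by (cases k) (auto simp: eval_nat_numeral algebra_simps)
  have Q: "Xm (Zk p Z 1) ** chainRY p k = mat2 0 (-(E*a*b/ss p 1)) (ss p 1/(E*a*b)) (-(ss p (k-1)*b^2/(ss p 1*E*a*b)))"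
    using Q_lemma[OF p k(1)] k by (simp add: Qf_def a_def b_def E_def)
  have XZ: "Xm Z = mat2 0 (-E) (1/E) 0" by (simp add: Xm_eq E_def)
  have Xk1: "Xm (Zk p Z (k + 1)) = mat2 0 (-(E*a/b)) (b/(E*a)) 0"
  proof -
    have "Zk p Z (k+1) = Z + ln (ss p k / ss p (Suc k))" using Zkj[of "k+1" p Z] k p by simp
    thus ?thesis using pos by (simp add: Xm_Zln a_def b_def E_def)
  qed
  have mp: "((-1::real) ^ (k - 1)) *\<^sub>R mpow (Fm p) k = (-1/ss p 1) *\<^sub>R mat2 (-(ss p (k-1))) (-(a^2)) (a^2) (b^2)"
    using mpow_F[of p m] p sq unfolding m by (simp add: eval_nat_numeral)
  show ?thesis unfolding Q XZ Xk1 mp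
    by (rule fin_alg[OF ab pos(3) pr, symmetric])
qed

lemma last_id:
  assumes p: "p \<ge> 3"
  shows "Xm Z ** (((-1::real) ^ p) *\<^sub>R mpow (Fm p) (p - 1)) ** Xm Z
           = Xm (Zk p Z 1) ** chainRY p (p - 2) ** Rm ** Xm (Zk p Z p)"
proof -
  define k where "k = p - 2"
  have k: "1 \<le> k" "k \<le> p - 2" "Suc k = p - 1" "Suc (Suc k) = p" using p by (auto simp: k_def)
  define a where "a = sqrt (ss p 2)"
  define b where "b = sqrt (ss p 1)"
  define E where "E = exp (Z/2)"
  have pos: "ss p 2 > 0" "ss p 1 > 0"
    using p by (auto intro!: ss_pos)
  have ab: "a > 0" "b > 0" "E > 0" using pos by (auto simp: a_def b_def E_def)
  have sq: "ss p 2 = a^2" "ss p 1 = b^2"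
    using pos by (auto simp: a_def b_def)
  have r1: "ss p k = ss p 2" using ss_refl[of 2 p] p by (simp add: k_def)
  have r2: "ss p (Suc k) = ss p 1" using ss_refl[of 1 p] p k by simp
  have r3: "ss p (Suc (Suc k)) = 0" using k by (simp add: ss_def)
  have pr: "ss p (k-1) * b^2 + (b^2)^2 = a^4"
  proof -
    have "ss p (Suc (k-1)) ^ 2 - ss p (k-1) * ss p (k-1+2) = ss p 1 ^ 2" by (rule ss_prod)
    moreover have "Suc (k-1) = k" "k - 1 + 2 = Suc k" using k by auto
    ultimately show ?thesis using r1 r2 sq by (simp add: algebra_simps eval_nat_numeral)
  qed
  have Q: "Xm (Zk p Z 1) ** chainRY p k = mat2 0 (-(E*a*b/b^2)) (b^2/(E*a*b)) (-(ss p (k-1)*b^2/(b^2*E*a*b)))"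
  proof -
    have "Xm (Zk p Z 1) ** chainRY p k = Qf p Z k" using Q_lemma[OF p k(1)] k(2) by simp
    also have "Qf p Z k = mat2 0 (-(E*a*b/b^2)) (b^2/(E*a*b)) (-(ss p (k-1)*b^2/(b^2*E*a*b)))"
      apply (simp only: Qf_def r1 r2 a_def[symmetric] b_def[symmetric] E_def[symmetric])
      apply (simp only: sq(2))
      done
    finally show ?thesis .
  qed
  have XZ: "Xm Z = mat2 0 (-E) (1/E) 0" by (simp add: Xm_eq E_def)
  have Xp: "Xm (Zk p Z p) = mat2 0 (-(E*b/a)) (a/(E*b)) 0"
    using pos by (simp add: Zkp[OF p] Xm_Zln a_def b_def E_def)
  have mp: "((-1::real) ^ p) *\<^sub>R mpow (Fm p) (p - 1) = (-1/b^2) *\<^sub>R mat2 (-(a^2)) (-(b^2)) (b^2) 0"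
  proof -
    have "mpow (Fm p) (p - 1) = ((-1)^(Suc k) / ss p 1) *\<^sub>R mat2 (- ss p k) (- ss p (Suc k)) (ss p (Suc k)) (ss p (k+2))"
      using mpow_F[of p k] p k(3) by simp
    moreover have "(-1::real)^p * (-1)^(Suc k) = -1"
      using k(4) by (metis power_add add_Suc_right add_Suc power_Suc neg_one_power_add_eq_neg_one_power_diff neg_one_even_power dvd_triv_left mult.commute odd_two_times_div_two_nat even_add mult_2 uminus_power_if mult_minus1 mult_1 power_minus1_even)
    ultimately show ?thesis using r1 r2 r3 sq by (simp add: eval_nat_numeral)
  qed
  show ?thesis unfolding k_def[symmetric] Q XZ Xp mp
    by (rule fin2_alg[OF ab pr, symmetric])
qed

theorem mainTheorem3:
  fixes p :: nat and Z :: real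
  assumes "p \<ge> 3"
  shows "Xm Z ** Fm p ** Xm Z = Xm (Zk p Z 1) ** Lm ** Xm (Zk p Z 2)
    \<and> (\<forall>k. 2 \<le> k \<and> k \<le> p - 2 \<longrightarrow>
           Xm Z ** (((-1::real) ^ (k - 1)) *\<^sub>R mpow (Fm p) k) ** Xm Z
             = Xm (Zk p Z 1) ** chainRY p k ** Lm ** Xm (Zk p Z (k + 1)))
    \<and> Xm Z ** (((-1::real) ^ p) *\<^sub>R mpow (Fm p) (p - 1)) ** Xm Z
           = Xm (Zk p Z 1) ** chainRY p (p - 2) ** Rm ** Xm (Zk p Z p)"
proof (intro conjI allI impI)
  have g: "Xm Z ** (((-1::real) ^ (1 - 1)) *\<^sub>R mpow (Fm p) 1) ** Xm Z
       = Xm (Zk p Z 1) ** chainRY p 1 ** Lm ** Xm (Zk p Z (1 + 1))"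
    using assms by (intro gen_k) auto
  have c1: "chainRY p 1 = mat 1" by (simp add: chainRY_def)
  have m1: "mpow (Fm p) 1 = Fm p" by simp
  show "Xm Z ** Fm p ** Xm Z = Xm (Zk p Z 1) ** Lm ** Xm (Zk p Z 2)"
    using g unfolding c1 m1 by (simp add: numeral_2_eq_2)
next
  fix k assume "2 \<le> k \<and> k \<le> p - 2"
  thus "Xm Z ** (((-1::real) ^ (k - 1)) *\<^sub>R mpow (Fm p) k) ** Xm Z
             = Xm (Zk p Z 1) ** chainRY p k ** Lm ** Xm (Zk p Z (k + 1))"
    using assms by (intro gen_k) auto
next
  show "Xm Z ** (((-1::real) ^ p) *\<^sub>R mpow (Fm p) (p - 1)) ** Xm Z
           = Xm (Zk p Z 1) ** chainRY p (p - 2) ** Rm ** Xm (Zk p Z p)"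
    by (rule last_id[OF assms])
qed

end
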